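(* Let $N\ge1$, $\varphi,\gamma\in(0,1)$ with $\varphi+\gamma\ge1$. Consider one transition $\boldsymbol{x}\to Y$ on $\{0,1\}^N$ generated as follows: $Z$ is a random element of $\{0,1\}^N$ with exchangeable coordinates, $(U_k)_k$ are i.i.d. Uniform$(0,1)$ independent of $Z$, and independently for each $k$: if $Z[k]=1$, $Y[k]=1$ iff $\boldsymbol{x}[k]=0$ or ($\boldsymbol{x}[k]=1$ and $U_k\ge\bar\varphi/\gamma$); if $Z[k]=0$ and $\varphi\le\gamma$, $Y[k]=0$ iff $\boldsymbol{x}[k]=0$ or ($\boldsymbol{x}[k]=1$ and $U_k\ge\varphi/\gamma$); if $Z[k]=0$ and $\varphi>\gamma$, $Y[k]=1$ iff $\boldsymbol{x}[k]=1$ or ($\boldsymbol{x}[k]=0$ and $U_k\ge\bar\varphi/\bar\gamma$). Let $N_{0\cdot}=N-\|\boldsymbol{x}\|$, $N_{1\cdot}=\|\boldsymbol{x}\|$, $N_{01}=|\{k:\boldsymbol{x}[k]=0,Y[k]=1\}|$, $N_{11}=|\{k:\boldsymbol{x}[k]=1,Y[k]=1\}|$. Then the probability generating function $\mathbb{E}[s_{01}^{N_{01}}s_{11}^{N_{11}}\mid\|Z\|=\zeta]$, where $N=N_{0\cdot}+N_{1\cdot}$, is the coefficient of $\binom{N}{\zeta}\xi^\zeta$ in $$\begin{cases}(1+\xi s_{01})^{N_{0\cdot}}\big(1-\varphi/\gamma+s_{11}\varphi/\gamma+\xi(\bar\varphi/\gamma+s_{11}(1-\bar\varphi/\gamma))\big)^{N_{1\cdot}},&\varphi\le\gamma,\\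 \big(\bar\varphi/\bar\gamma+s_{01}(1-\bar\varphi/\bar\gamma)+\xi s_{01}\big)^{N_{0\cdot}}\big(s_{11}+\xi(\bar\varphi/\gamma+s_{11}(1-\bar\varphi/\gamma))\big)^{N_{1\cdot}},&\varphi>\gamma.\end{cases}$$
   Context: $\bar a=1-a$; $\|\boldsymbol{x}\|$ is the number of ones of $\boldsymbol{x}\in\{0,1\}^N$. This describes a transition of a time-homogeneous process with exchangeable coordinates from $X_{t-1}=\boldsymbol{x}$ to $X_t=Y$ with driving variable $Z=Z_t$. *)

theory Defs
  imports "HOL-Probability.Probability" "HOL-Combinatorics.Permutations"
          "HOL-Computational_Algebra.Polynomial"
begin

text \<open>States in {0,1}^N are functions nat => bool, only coordinates k < N matter.\<close>

definition ones :: "nat \<Rightarrow> (nat \<Rightarrow> bool) \<Rightarrow> nat" where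
  "ones N x = card {k. k < N \<and> x k}"

definition exchangeable :: "nat \<Rightarrow> (nat \<Rightarrow> bool) pmf \<Rightarrow> bool" where
  "exchangeable N Z \<longleftrightarrow> (\<forall>\<pi>. \<pi> permutes {..<N} \<longrightarrow> map_pmf (\<lambda>z. z \<circ> \<pi>) Z = Z)"

definition step :: "real \<Rightarrow> real \<Rightarrow> bool \<Rightarrow> bool \<Rightarrow> real \<Rightarrow> bool" where
  "step \<phi> \<gamma> xk zk u =
     (if zk then (\<not> xk \<or> (xk \<and> u \<ge> (1 - \<phi>) / \<gamma>))
      else if \<phi> \<le> \<gamma> then \<not> (\<not> xk \<or> (xk \<and> u \<ge> \<phi> / \<gamma>))
      else (xk \<or> (\<not> xk \<and> u \<ge> (1 - \<phi>) / (1 - \<gamma>))))"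

definition newstate :: "real \<Rightarrow> real \<Rightarrow> (nat \<Rightarrow> bool) \<Rightarrow> (nat \<Rightarrow> bool) \<Rightarrow> (nat \<Rightarrow> real) \<Rightarrow> nat \<Rightarrow> bool" where
  "newstate \<phi> \<gamma> x z u k = step \<phi> \<gamma> (x k) (z k) (u k)"

definition N01 :: "nat \<Rightarrow> (nat \<Rightarrow> bool) \<Rightarrow> (nat \<Rightarrow> bool) \<Rightarrow> nat" where
  "N01 N x y = card {k. k < N \<and> \<not> x k \<and> y k}"

definition N11 :: "nat \<Rightarrow> (nat \<Rightarrow> bool) \<Rightarrow> (nat \<Rightarrow> bool) \<Rightarrow> nat" where
  "N11 N x y = card {k. k < N \<and> x k \<and> y k}"

definition cond_law :: "nat \<Rightarrow> (nat \<Rightarrow> bool) pmf \<Rightarrow> nat \<Rightarrow> ((nat \<Rightarrow> bool) \<times> (nat \<Rightarrow> real)) measure" where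
  "cond_law N Z \<zeta> = measure_pmf (cond_pmf Z {z. ones N z = \<zeta>})
      \<Otimes>\<^sub>M PiM {..<N} (\<lambda>_. uniform_measure lborel {0<..<1::real})"

definition gen_poly :: "real \<Rightarrow> real \<Rightarrow> nat \<Rightarrow> nat \<Rightarrow> real \<Rightarrow> real \<Rightarrow> real poly" where
  "gen_poly \<phi> \<gamma> n0 n1 s01 s11 =
     (if \<phi> \<le> \<gamma> then
        [:1, s01:] ^ n0 *
        [:1 - \<phi>/\<gamma> + s11 * \<phi>/\<gamma>, (1-\<phi>)/\<gamma> + s11 * (1 - (1-\<phi>)/\<gamma>):] ^ n1
      else
        [:(1-\<phi>)/(1-\<gamma>) + s01 * (1 - (1-\<phi>)/(1-\<gamma>)), s01:] ^ n0 *
        [:s11, (1-\<phi>)/\<gamma> + s11 * (1 - (1-\<phi>)/\<gamma>):] ^ n1)"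

end

theory Submission
  imports Defs
begin


abbreviation U :: "real measure" where "U \<equiv> uniform_measure lborel {0<..<1::real}"

lemma U_prob: "prob_space U"
  by (rule prob_space_uniform_measure) auto

lemma sets_U[simp, measurable_cong]: "sets U = sets borel" by simp

lemma int_U:
  assumes "0 \<le> t" "t \<le> 1"
  shows "(\<integral>u. (if t \<le> u then a else b) \<partial>U) = a*(1-t) + b*t"
proof -
  interpret prob_space U by (rule U_prob)
  have eq: "(\<lambda>u. (if t \<le> u then a else b)) = (\<lambda>u. b + (a - b) * indicator {t..} u)"
    by (auto simp: indicator_def)
  have m: "measure U {t..} = 1 - t"
  proof -
    have "measure U {t..} = measure lborel ({0<..<1} \<inter> {t..}) / measure lborel {0<..<1::real}"
      by (subst measure_uniform_measure) auto
    also have "\<dots> = 1 - t"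
    proof (cases "t = 0")
      case True
      then have "{0<..<1} \<inter> {t..} = {0<..<1::real}" by auto
      then show ?thesis using True by simp
    next
      case False
      then have "{0<..<1} \<inter> {t..} = {t..<1::real}" using assms by auto
      then show ?thesis using assms by simp
    qed
    finally show ?thesis .
  qed
  have i: "integrable U (\<lambda>u. (a - b) * indicator {t..} u :: real)"
    by (rule integrable_const_bound[where B="\<bar>a-b\<bar>"]) (auto simp: indicator_def)
  have "(\<integral>u. b + (a - b) * indicator {t..} u \<partial>U) = (\<integral>u. b \<partial>U) + (\<integral>u. (a - b) * indicator {t..} u \<partial>U)"
    by (rule Bochner_Integration.integral_add[OF _ i]) simp
  also have "\<dots> = b + (a - b) * (1 - t)" using m by simp
  finally show ?thesis unfolding eq by (simp add: algebra_simps)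
qed



lemma prod_monom1: "finite X \<Longrightarrow> (\<Prod>k\<in>X. monom (b k) 1) = monom (\<Prod>k\<in>X. b k :: 'a::comm_ring_1) (card X)"
  by (induction X rule: finite_induct) (auto simp: mult_monom)

lemma prod_const_poly: "(\<Prod>k\<in>X. [:a k:]) = [:\<Prod>k\<in>X. a k :: 'a::comm_ring_1:]"
  by (induction X rule: infinite_finite_induct) auto

lemma coeff_prod_linear:
  fixes a b :: "nat \<Rightarrow> 'a::comm_ring_1"
  assumes "finite A"
  shows "coeff (\<Prod>k\<in>A. [:a k, b k:]) j =
    (\<Sum>S\<in>{S. S \<subseteq> A \<and> card S = j}. \<Prod>k\<in>A. if k \<in> S then b k else a k)"
proof -
  have "(\<Prod>k\<in>A. [:a k, b k:]) = (\<Prod>k\<in>A. monom (b k) 1 + [:a k:])"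
    by (intro prod.cong refl) (simp add: monom_Suc monom_0)
  also have "\<dots> = (\<Sum>X\<in>Pow A. (\<Prod>k\<in>X. monom (b k) 1) * (\<Prod>k\<in>A-X. [:a k:]))"
    by (rule prod_add[OF assms])
  also have "\<dots> = (\<Sum>X\<in>Pow A. [:\<Prod>k\<in>A-X. a k:] * monom (\<Prod>k\<in>X. b k) (card X))"
    by (intro sum.cong refl) (auto simp: prod_monom1[simplified] prod_const_poly finite_subset[OF _ assms] mult.commute)
  finally have "coeff (\<Prod>k\<in>A. [:a k, b k:]) j =
     (\<Sum>X\<in>Pow A. if card X = j then (\<Prod>k\<in>X. b k) * (\<Prod>k\<in>A-X. a k) else 0)"
    by (simp add: coeff_sum coeff_monom mult.commute if_distrib cong: if_cong)
  also have "\<dots> = (\<Sum>X\<in>{X\<in>Pow A. card X = j}. (\<Prod>k\<in>X. b k) * (\<Prod>k\<in>A-X. a k))"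
    by (rule sum.inter_filter[symmetric]) (simp add: assms)
  also have "\<dots> = (\<Sum>S\<in>{S. S \<subseteq> A \<and> card S = j}. \<Prod>k\<in>A. if k \<in> S then b k else a k)"
  proof (intro sum.cong)
    fix X assume "X \<in> {S. S \<subseteq> A \<and> card S = j}"
    then have X: "X \<subseteq> A" by auto
    have "A \<inter> {k. k \<in> X} = X" "A \<inter> - {k. k \<in> X} = A - X" using X by auto
    then show "(\<Prod>k\<in>X. b k) * (\<Prod>k\<in>A-X. a k) = (\<Prod>k\<in>A. if k \<in> X then b k else a k)"
      by (simp add: prod.If_cases[OF assms])
  qed auto
  finally show ?thesis .
qed



lemma ones_perm:
  fixes N :: nat
  assumes "\<pi> permutes {..<N}"
  shows "ones N (z \<circ> \<pi>) = ones N z"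
proof -
  have "bij_betw \<pi> {k. k < N \<and> z (\<pi> k)} {k. k < N \<and> z k}"
  proof (rule bij_betw_imageI)
    show "inj_on \<pi> {k. k < N \<and> z (\<pi> k)}" using permutes_inj[OF assms] by (auto intro: inj_on_subset)
    show "\<pi> ` {k. k < N \<and> z (\<pi> k)} = {k. k < N \<and> z k}"
    proof safe
      fix k assume "k < N" "z k"
      then show "k \<in> \<pi> ` {k. k < N \<and> z (\<pi> k)}"
        using assms permutes_inverses(1)[OF assms, of k]
        by (metis (mono_tags, lifting) image_eqI lessThan_iff mem_Collect_eq permutes_in_image permutes_inv)
    qed (use permutes_in_image[OF assms] in auto)
  qed
  then show ?thesis unfolding ones_def by (simp add: bij_betw_same_card)
qed

lemma Sz_perm:
  fixes N :: nat
  assumes "\<pi> permutes {..<N}"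
  shows "{k. k < N \<and> (z \<circ> \<pi>) k} = \<pi> -` {k. k < N \<and> z k}"
  using permutes_in_image[OF assms] by auto

lemma exists_perm:
  fixes N :: nat
  assumes "S \<subseteq> {..<N}" "T \<subseteq> {..<N}" "card S = card T"
  shows "\<exists>\<pi>. \<pi> permutes {..<N} \<and> \<pi> -` T = S"
proof -
  have fS1: "finite S" by (rule finite_subset[OF assms(1)]) simp
  have fS2: "finite T" by (rule finite_subset[OF assms(2)]) simp
  note fS = fS1 fS2
  obtain f where f: "bij_betw f S T" using finite_same_card_bij[OF fS assms(3)] by blast
  have "card ({..<N} - S) = card ({..<N} - T)"
    using assms fS by (simp add: card_Diff_subset)
  then obtain g where g: "bij_betw g ({..<N} - S) ({..<N} - T)"
    using finite_same_card_bij[of "{..<N} - S" "{..<N} - T"] by auto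
  define \<pi> where "\<pi> k = (if k \<in> S then f k else if k < N then g k else k)" for k
  have "bij_betw \<pi> S T" using f by (rule bij_betw_cong[THEN iffD1, rotated]) (auto simp: \<pi>_def)
  moreover have "bij_betw \<pi> ({..<N} - S) ({..<N} - T)"
    using g by (rule bij_betw_cong[THEN iffD1, rotated]) (auto simp: \<pi>_def)
  ultimately have "bij_betw \<pi> (S \<union> ({..<N} - S)) (T \<union> ({..<N} - T))"
    by (rule bij_betw_combine) auto
  moreover have "S \<union> ({..<N} - S) = {..<N}" "T \<union> ({..<N} - T) = {..<N}" using assms by auto
  ultimately have b: "bij_betw \<pi> {..<N} {..<N}" by simp
  have p: "\<pi> permutes {..<N}"
    by (rule bij_imp_permutes[OF b]) (auto simp: \<pi>_def dest: subsetD[OF assms(1)])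
  have "\<pi> -` T = S"
  proof safe
    fix k assume k: "\<pi> k \<in> T"
    show "k \<in> S"
    proof (rule ccontr)
      assume "k \<notin> S"
      show False
      proof (cases "k < N")
        case True
        then have "\<pi> k = g k" using \<open>k \<notin> S\<close> by (simp add: \<pi>_def)
        moreover have "g k \<in> {..<N} - T" using g True \<open>k \<notin> S\<close> by (auto dest: bij_betwE)
        ultimately show False using k by auto
      next
        case False
        then show False using k \<open>k \<notin> S\<close> assms(2) by (auto simp: \<pi>_def)
      qed
    qed
  next
    fix k assume "k \<in> S" then show "k \<in> \<pi> -` T" using f by (auto simp: \<pi>_def dest: bij_betwE)
  qed
  then show ?thesis using p by blast
qed

lemma uniform_pattern:
  assumes exch: "exchangeable N Z" and pos: "measure_pmf.prob Z {z. ones N z = \<zeta>} > 0"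
  defines "W \<equiv> cond_pmf Z {z. ones N z = \<zeta>}"
  defines "Q \<equiv> map_pmf (\<lambda>z. {k. k < N \<and> z k}) W"
  shows "set_pmf Q \<subseteq> {S. S \<subseteq> {..<N} \<and> card S = \<zeta>}"
    and "S \<in> {S. S \<subseteq> {..<N} \<and> card S = \<zeta>} \<Longrightarrow> pmf Q S = 1 / real (N choose \<zeta>)"
proof -
  let ?A = "{z. ones N z = \<zeta>}"
  let ?F = "{S. S \<subseteq> {..<N} \<and> card S = \<zeta>}"
  have ne: "set_pmf Z \<inter> ?A \<noteq> {}" using pos measure_pmf_zero_iff[of Z ?A] by auto
  have setW: "set_pmf W = set_pmf Z \<inter> ?A" unfolding W_def using ne by simp
  show sQ: "set_pmf Q \<subseteq> ?F" unfolding Q_def using setW by (auto simp: ones_def)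
  have inv: "map_pmf (\<lambda>z. z \<circ> \<pi>) W = W" if p: "\<pi> permutes {..<N}" for \<pi>
  proof -
    have pre: "(\<lambda>z. z \<circ> \<pi>) -` ?A = ?A" using ones_perm[OF p] by auto
    have "W = cond_pmf (map_pmf (\<lambda>z. z \<circ> \<pi>) Z) ?A"
      using exch p unfolding exchangeable_def W_def by simp
    also have "\<dots> = map_pmf (\<lambda>z. z \<circ> \<pi>) (cond_pmf Z ((\<lambda>z. z \<circ> \<pi>) -` ?A))"
      by (rule cond_map_pmf) (use ne pre in simp)
    finally show ?thesis unfolding pre W_def by simp
  qed
  have eqQ: "pmf Q S = pmf Q T" if S: "S \<in> ?F" and T: "T \<in> ?F" for S T
  proof -
    obtain \<pi> where p: "\<pi> permutes {..<N}" and pT: "\<pi> -` T = S"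
      using exists_perm[of S N T] S T by auto
    have "Q = map_pmf (\<lambda>z. {k. k < N \<and> z k}) (map_pmf (\<lambda>z. z \<circ> \<pi>) W)"
      unfolding Q_def inv[OF p] ..
    also have "\<dots> = map_pmf (vimage \<pi>) Q"
      unfolding Q_def map_pmf_comp using Sz_perm[OF p] by simp
    finally have Qeq: "Q = map_pmf (vimage \<pi>) Q" .
    have injv: "inj (vimage \<pi>)"
      using permutes_surj[OF p] by (metis injI surj_image_vimage_eq)
    have "pmf Q S = pmf (map_pmf (vimage \<pi>) Q) (\<pi> -` T)" using Qeq pT by simp
    also have "\<dots> = pmf Q T" by (rule pmf_map_inj'[OF injv])
    finally show ?thesis .
  qed
  have finF: "finite ?F" by (rule finite_subset[of _ "Pow {..<N}"]) auto
  have cardF: "card ?F = N choose \<zeta>" using n_subsets[of "{..<N}" \<zeta>] by simp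
  have sum1: "(\<Sum>S\<in>?F. pmf Q S) = 1" by (rule sum_pmf_eq_1[OF finF sQ])
  assume S: "S \<in> ?F"
  have "(\<Sum>T\<in>?F. pmf Q T) = (\<Sum>T\<in>?F. pmf Q S)" by (rule sum.cong[OF refl], rule eqQ, assumption, rule S)
  then have "real (card ?F) * pmf Q S = 1" using sum1 by simp
  then show "pmf Q S = 1 / real (N choose \<zeta>)" unfolding cardF
    by (metis mult.commute nonzero_eq_divide_eq mult_zero_left zero_neq_one)
qed



definition fac :: "real \<Rightarrow> real \<Rightarrow> real \<Rightarrow> real \<Rightarrow> bool \<Rightarrow> bool \<Rightarrow> real \<Rightarrow> real" where
  "fac \<phi> \<gamma> s01 s11 xk zk u = (if step \<phi> \<gamma> xk zk u then (if xk then s11 else s01) else 1)"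

definition pval :: "real \<Rightarrow> real \<Rightarrow> real \<Rightarrow> real \<Rightarrow> bool \<Rightarrow> bool \<Rightarrow> real" where
  "pval \<phi> \<gamma> s01 s11 xk zk =
    (if zk then (if xk then (1-\<phi>)/\<gamma> + s11 * (1 - (1-\<phi>)/\<gamma>) else s01)
     else if \<phi> \<le> \<gamma> then (if xk then 1 - \<phi>/\<gamma> + s11 * \<phi>/\<gamma> else 1)
     else (if xk then s11 else (1-\<phi>)/(1-\<gamma>) + s01 * (1 - (1-\<phi>)/(1-\<gamma>))))"

lemma fac_meas[measurable]: "fac \<phi> \<gamma> s01 s11 xk zk \<in> borel_measurable borel"
  unfolding fac_def step_def by measurable

lemma fac_bound: "\<bar>fac \<phi> \<gamma> s01 s11 xk zk u\<bar> \<le> max 1 (max \<bar>s01\<bar> \<bar>s11\<bar>)"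
  unfolding fac_def by auto

lemma int_fac:
  assumes "0 < \<phi>" "\<phi> < 1" "0 < \<gamma>" "\<gamma> < 1" "\<phi> + \<gamma> \<ge> 1"
  shows "(\<integral>u. fac \<phi> \<gamma> s01 s11 xk zk u \<partial>U) = pval \<phi> \<gamma> s01 s11 xk zk"
proof -
  have t1: "0 \<le> (1-\<phi>)/\<gamma>" "(1-\<phi>)/\<gamma> \<le> 1" using assms by auto
  show ?thesis
  proof (cases zk)
    case zT: True
    show ?thesis
    proof (cases xk)
      case True
      have "fac \<phi> \<gamma> s01 s11 xk zk = (\<lambda>u. if (1-\<phi>)/\<gamma> \<le> u then s11 else 1)"
        using zT True by (auto simp: fac_def step_def fun_eq_iff)
      then show ?thesis using int_U[OF t1, of s11 1] zT True by (simp add: pval_def algebra_simps)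
    next
      case False
      have "fac \<phi> \<gamma> s01 s11 xk zk = (\<lambda>u. if 0 \<le> u then s01 else s01)"
        using zT False by (auto simp: fac_def step_def fun_eq_iff)
      then show ?thesis using int_U[of 0 s01 s01] zT False by (simp add: pval_def algebra_simps)
    qed
  next
    case zF: False
    show ?thesis
    proof (cases "\<phi> \<le> \<gamma>")
      case le: True
      have t2: "0 \<le> \<phi>/\<gamma>" "\<phi>/\<gamma> \<le> 1" using assms le by auto
      show ?thesis
      proof (cases xk)
        case True
        have "fac \<phi> \<gamma> s01 s11 xk zk = (\<lambda>u. if \<phi>/\<gamma> \<le> u then 1 else s11)"
          using zF le True by (auto simp: fac_def step_def fun_eq_iff)
        then show ?thesis using int_U[OF t2, of 1 s11] zF le True by (simp add: pval_def algebra_simps)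
      next
        case False
        have "fac \<phi> \<gamma> s01 s11 xk zk = (\<lambda>u. if 0 \<le> u then 1 else 1)"
          using zF le False by (auto simp: fac_def step_def fun_eq_iff)
        then show ?thesis using int_U[of 0 1 1] zF le False by (simp add: pval_def algebra_simps)
      qed
    next
      case gt: False
      have t3: "0 \<le> (1-\<phi>)/(1-\<gamma>)" "(1-\<phi>)/(1-\<gamma>) \<le> 1" using assms gt by auto
      show ?thesis
      proof (cases xk)
        case True
        have "fac \<phi> \<gamma> s01 s11 xk zk = (\<lambda>u. if 0 \<le> u then s11 else s11)"
          using zF gt True by (auto simp: fac_def step_def fun_eq_iff)
        then show ?thesis using int_U[of 0 s11 s11] zF gt True by (simp add: pval_def algebra_simps)
      next
        case False
        have "fac \<phi> \<gamma> s01 s11 xk zk = (\<lambda>u. if (1-\<phi>)/(1-\<gamma>) \<le> u then s01 else 1)"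
          using zF gt False by (auto simp: fac_def step_def fun_eq_iff)
        then show ?thesis using int_U[OF t3, of s01 1] zF gt False by (simp add: pval_def algebra_simps)
      qed
    qed
  qed
qed

lemma integrand_prod:
  "s01 ^ N01 N x y * s11 ^ N11 N x y = (\<Prod>k<N. if y k then (if x k then s11 else s01) else 1)"
proof -
  have "(\<Prod>k<N. if y k then (if x k then s11 else s01) else 1) =
        (\<Prod>k<N. (if \<not> x k \<and> y k then s01 else 1) * (if x k \<and> y k then s11 else 1))"
    by (intro prod.cong) auto
  also have "\<dots> = (\<Prod>k\<in>{k\<in>{..<N}. \<not> x k \<and> y k}. s01) * (\<Prod>k\<in>{k\<in>{..<N}. x k \<and> y k}. s11)"
    by (simp only: prod.distrib prod.inter_filter[OF finite_lessThan])
  also have "\<dots> = s01 ^ N01 N x y * s11 ^ N11 N x y"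
    unfolding N01_def N11_def by (simp add: conj_commute)
  finally show ?thesis ..
qed


theorem corollary6:
  fixes N \<zeta> :: nat and \<phi> \<gamma> s01 s11 :: real
    and x :: "nat \<Rightarrow> bool" and Z :: "(nat \<Rightarrow> bool) pmf"
  assumes "N \<ge> 1"
    and "0 < \<phi>" "\<phi> < 1" "0 < \<gamma>" "\<gamma> < 1" "\<phi> + \<gamma> \<ge> 1"
    and "exchangeable N Z"
    and "measure_pmf.prob Z {z. ones N z = \<zeta>} > 0"
  shows "(\<integral>zu. s01 ^ N01 N x (newstate \<phi> \<gamma> x (fst zu) (snd zu))
              * s11 ^ N11 N x (newstate \<phi> \<gamma> x (fst zu) (snd zu)) \<partial>cond_law N Z \<zeta>)
         = coeff (gen_poly \<phi> \<gamma> (N - ones N x) (ones N x) s01 s11) \<zeta> / real (N choose \<zeta>)"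
proof -
  define W where "W = cond_pmf Z {z. ones N z = \<zeta>}"
  define P where "P = PiM {..<N} (\<lambda>_::nat. U)"
  define K where "K = max 1 (max \<bar>s01\<bar> \<bar>s11\<bar>)"
  define F where "F x z u = (\<Prod>k<N. fac \<phi> \<gamma> s01 s11 (x k) (z k) (u k))" for x z u
  have Pprob: "prob_space P" unfolding P_def by (intro prob_space_PiM U_prob)
  interpret pair_prob_space "measure_pmf W" P
    by (simp add: pair_prob_space_def pair_sigma_finite_def prob_space_imp_sigma_finite
        prob_space_measure_pmf Pprob)
  interpret PS: product_sigma_finite "\<lambda>_::nat. U"
    by (simp add: product_sigma_finite_def prob_space_imp_sigma_finite U_prob)
  have eqf: "(\<lambda>zu. s01 ^ N01 N x (newstate \<phi> \<gamma> x (fst zu) (snd zu))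
              * s11 ^ N11 N x (newstate \<phi> \<gamma> x (fst zu) (snd zu))) = (\<lambda>zu. F x (fst zu) (snd zu))"
    by (simp add: fun_eq_iff integrand_prod F_def fac_def newstate_def)
  have meas: "(\<lambda>zu. F x (fst zu) (snd zu)) \<in> borel_measurable (measure_pmf W \<Otimes>\<^sub>M P)"
    unfolding F_def
  proof (rule borel_measurable_prod)
    fix k assume k: "k \<in> {..<N}"
    have e: "(\<lambda>zu. fac \<phi> \<gamma> s01 s11 (x k) (fst zu k) (snd zu k)) = (\<lambda>zu. if fst zu k then
       fac \<phi> \<gamma> s01 s11 (x k) True (snd zu k) else fac \<phi> \<gamma> s01 s11 (x k) False (snd zu k))"
      by (auto simp: fun_eq_iff)
    have c0: "(\<lambda>u. u k) \<in> measurable P U"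
      unfolding P_def by (rule measurable_component_singleton) (use k in simp)
    have c1: "(\<lambda>u. u k) \<in> borel_measurable P"
      using c0 measurable_cong_sets[OF refl sets_U] by blast
    have c: "(\<lambda>zu. snd zu k) \<in> borel_measurable (measure_pmf W \<Otimes>\<^sub>M P)"
      by (rule measurable_compose[OF measurable_snd c1])
    have g: "(\<lambda>zu. fac \<phi> \<gamma> s01 s11 (x k) b (snd zu k)) \<in> borel_measurable (measure_pmf W \<Otimes>\<^sub>M P)" for b
      using measurable_compose[OF c fac_meas] .
    have s0: "fst -` {z. z k} \<inter> space (measure_pmf W \<Otimes>\<^sub>M P) \<in> sets (measure_pmf W \<Otimes>\<^sub>M P)"
      by (rule measurable_sets[OF measurable_fst]) simp
    have "{zu \<in> space (measure_pmf W \<Otimes>\<^sub>M P). fst zu k} = fst -` {z. z k} \<inter> space (measure_pmf W \<Otimes>\<^sub>M P)"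
      by auto
    then have s: "{zu \<in> space (measure_pmf W \<Otimes>\<^sub>M P). fst zu k} \<in> sets (measure_pmf W \<Otimes>\<^sub>M P)"
      using s0 by simp
    show "(\<lambda>zu. fac \<phi> \<gamma> s01 s11 (x (k::nat)) (fst zu k) (snd zu k)) \<in> borel_measurable (measure_pmf W \<Otimes>\<^sub>M P)"
      by (subst e, rule measurable_If[OF g g s])
  qed
  have bnd: "\<bar>F x z u\<bar> \<le> K ^ N" for z u
    unfolding F_def abs_prod
    by (rule prod_le_power) (auto simp: K_def fac_bound)
  have int: "integrable (measure_pmf W \<Otimes>\<^sub>M P) (\<lambda>zu. F x (fst zu) (snd zu))"
    by (rule P.integrable_const_bound[where B="K ^ N"]) (use meas bnd in auto)
  have "cond_law N Z \<zeta> = measure_pmf W \<Otimes>\<^sub>M P" unfolding cond_law_def W_def P_def ..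
  then have "(\<integral>zu. s01 ^ N01 N x (newstate \<phi> \<gamma> x (fst zu) (snd zu))
              * s11 ^ N11 N x (newstate \<phi> \<gamma> x (fst zu) (snd zu)) \<partial>cond_law N Z \<zeta>)
      = (\<integral>z. (\<integral>u. F x z u \<partial>P) \<partial>W)"
    unfolding eqf using integral_fst'[OF int] by simp
  also have "\<dots> = (\<integral>z. (\<Prod>k<N. pval \<phi> \<gamma> s01 s11 (x k) (z k)) \<partial>W)"
  proof (intro Bochner_Integration.integral_cong refl)
    fix z
    have "(\<integral>u. F x z u \<partial>P) = (\<Prod>k<N. integral\<^sup>L U (fac \<phi> \<gamma> s01 s11 (x k) (z k)))"
      unfolding F_def P_def
    proof (rule PS.product_integral_prod)
      fix k
      interpret prob_space U by (rule U_prob)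
      show "integrable U (fac \<phi> \<gamma> s01 s11 (x k) (z k))"
        by (rule integrable_const_bound[where B=K]) (auto simp: K_def fac_bound)
    qed simp
    then show "(\<integral>u. F x z u \<partial>P) = (\<Prod>k<N. pval \<phi> \<gamma> s01 s11 (x k) (z k))"
      using int_fac[OF assms(2-6)] by simp
  qed
  also have "\<dots> = coeff (gen_poly \<phi> \<gamma> (N - ones N x) (ones N x) s01 s11) \<zeta> / real (N choose \<zeta>)"
  proof -
    define Q where "Q = map_pmf (\<lambda>z. {k. k < N \<and> z k}) W"
    define G where "G S = (\<Prod>k<N. pval \<phi> \<gamma> s01 s11 (x k) (k \<in> S))" for S
    define Fs where "Fs = {S. S \<subseteq> {..<N} \<and> card S = \<zeta>}"
    define a where "a k = pval \<phi> \<gamma> s01 s11 (x k) False" for k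
    define b where "b k = pval \<phi> \<gamma> s01 s11 (x k) True" for k
    have sQ: "set_pmf Q \<subseteq> Fs"
      using uniform_pattern(1)[OF assms(7) assms(8)] unfolding Q_def W_def Fs_def .
    have pQ: "pmf Q S = 1 / real (N choose \<zeta>)" if "S \<in> Fs" for S
      using uniform_pattern(2)[OF assms(7) assms(8)] that unfolding Q_def W_def Fs_def by blast
    have finF: "finite Fs" unfolding Fs_def by (rule finite_subset[of _ "Pow {..<N}"]) auto
    have "(\<integral>z. (\<Prod>k<N. pval \<phi> \<gamma> s01 s11 (x k) (z k)) \<partial>W) = (\<integral>S. G S \<partial>Q)"
      unfolding Q_def G_def integral_map_pmf
      by (intro Bochner_Integration.integral_cong prod.cong refl) simp_all
    also have "\<dots> = (\<Sum>S\<in>Fs. G S * pmf Q S)"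
      by (rule integral_measure_pmf_real[OF finF]) (use sQ in auto)
    also have "\<dots> = (\<Sum>S\<in>Fs. G S) / real (N choose \<zeta>)"
      by (simp add: pQ sum_divide_distrib)
    also have "(\<Sum>S\<in>Fs. G S) = coeff (\<Prod>k<N. [:a k, b k:]) \<zeta>"
      unfolding coeff_prod_linear[OF finite_lessThan] Fs_def G_def a_def b_def
      by (intro sum.cong prod.cong refl) auto
    also have "(\<Prod>k<N. [:a k, b k:]) = gen_poly \<phi> \<gamma> (N - ones N x) (ones N x) s01 s11"
    proof -
      define P0 where "P0 = [:pval \<phi> \<gamma> s01 s11 False False, pval \<phi> \<gamma> s01 s11 False True:]"
      define P1 where "P1 = [:pval \<phi> \<gamma> s01 s11 True False, pval \<phi> \<gamma> s01 s11 True True:]"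
      have "(\<Prod>k<N. [:a k, b k:]) = (\<Prod>k<N. if x k then P1 else P0)"
        by (intro prod.cong refl) (simp add: a_def b_def P0_def P1_def)
      also have "\<dots> = P1 ^ card ({..<N} \<inter> {k. x k}) * P0 ^ card ({..<N} \<inter> - {k. x k})"
        by (simp add: prod.If_cases)
      also have "card ({..<N} \<inter> {k. x k}) = ones N x"
        unfolding ones_def by (rule arg_cong[where f=card]) auto
      also have "{..<N} \<inter> - {k. x k} = {..<N} - {k. k < N \<and> x k}" by auto
      also have "card \<dots> = N - ones N x"
        unfolding ones_def by (subst card_Diff_subset) auto
      finally show ?thesis
        unfolding gen_poly_def P0_def P1_def by (simp add: pval_def mult.commute)
    qed
    finally show ?thesis .
  qed
  finally show ?thesis .
qed

end
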